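(* Under Assumptions 1 and 2, the dual variables generated by the accurate-gradient algorithm satisfy $\|y_i(t)\|\le\sqrt n\,\kappa_2$ for all $i\in\mathcal V$ and all $t\in\{1,\dots,T\}$.
   Context: Network: Let $n\ge2$, $\mathcal V=\{1,\dots,n\}$. For $t=0,1,2,\dots$, $\mathcal G(t)=(\mathcal V,\mathcal E(t),A(t))$ is a digraph with weight matrix $A(t)=(a_{ij}(t))_{n\times n}$, where for some $\gamma>0$, $\gamma\le a_{ij}(t)\le1$ if $(j,i)\in\mathcal E(t)$ and $a_{ij}(t)=0$ otherwise; $\mathcal N_i(t)=\{j:(j,i)\in\mathcal E(t)\}$ and $i\in\mathcal N_i(t)$. Assumption 1: there is an integer $U>0$ such that for every $t\ge0$ the digraph $(\mathcal V,\bigcup_{k=tU}^{(t+1)U-1}\mathcal E(k))$ is strongly connected, and $A(t)1_n=A(t)^T1_n=1_n$ for all $t$. Problem: $\Omega\subset\mathbb R^m$ is convex; for each $i\in\mathcal V$ and $t\ge0$, $f_i^t:\Omega\times\Omega\to\mathbb R$ and $g_i^t=(g_{i1}^t,\dots,g_{ih}^t)^T:\Omega\to\mathbb R^h$; $\mathcal X^t=\{x\in\Omega:\sum_ig_i^t(x)\le0\}$; $\nabla_2$ is the gradient in the second argument; $\nabla g_i^t(x)=[\nabla g_{i1}^t(x),\dots,\nabla g_{ih}^t(x)]\in\mathbb R^{m\times h}$. Assumption 2: (i) $f_i^t(x,\cdot)$ convex, each $g_{ik}^t$ convex (differentiable); (ii) $\mathcal X^t\neq\emptyset$, $\Omega$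 compact with $\|x\|\le\kappa$ on $\Omega$; (iii) $\|\nabla_2f_i^t(x,y)\|\le\kappa_1$, $\|g_i^t(x)\|\le\kappa_2$, $\|\nabla g_{ik}^t(x)\|\le\kappa_3$ on $\Omega$. Algorithm: $\phi:\mathbb R^m\to\mathbb R$ differentiable and $\mu$-strongly convex, $\mathcal D_\phi(x,y)=\phi(x)-\phi(y)-\langle\nabla\phi(y),x-y\rangle$. Non-increasing step sizes $\zeta_t,\eta_t\in(0,1]$ with $\zeta_t\le\eta_t$; $x_i(0)\in\Omega$, $y_i(0)=0\in\mathbb R^h$; for $t\ge0$: $z_i(t)=\sum_{j\in\mathcal N_i(t)}a_{ij}(t)x_j(t)$; $x_i(t+1)=\arg\min_{x\in\Omega}\{\mathcal D_\phi(x,z_i(t))+\langle\zeta_t\nabla_2f_i^t(x_i(t),x_i(t))+\eta_t\nabla g_i^t(x_i(t))y_i(t),x\rangle\}$; $y_i(t+1)=[(1-\eta_t)\sum_{j\in\mathcal N_i(t)}a_{ij}(t)y_j(t)+\eta_tg_i^t(x_i(t))]_+$ (componentwise positive part). $T$ is the (finite) time horizon. *)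

theory Defs
  imports "HOL-Analysis.Analysis"
begin

definition strongly_connected_on :: "nat set \<Rightarrow> (nat \<times> nat) set \<Rightarrow> bool" where
  "strongly_connected_on V E \<longleftrightarrow> (\<forall>i\<in>V. \<forall>j\<in>V. (i, j) \<in> (E \<inter> (V \<times> V))\<^sup>*)"

definition strongly_convex_grad ::
  "real \<Rightarrow> (real^'m \<Rightarrow> real) \<Rightarrow> (real^'m \<Rightarrow> real^'m) \<Rightarrow> bool" where
  "strongly_convex_grad \<mu> phi dphi \<longleftrightarrow>
     (\<forall>x y. phi y \<ge> phi x + dphi x \<bullet> (y - x) + \<mu> / 2 * (norm (y - x))\<^sup>2)"

definition bregman :: "(real^'m \<Rightarrow> real) \<Rightarrow> (real^'m \<Rightarrow> real^'m) \<Rightarrow> real^'m \<Rightarrow> real^'m \<Rightarrow> real" where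
  "bregman phi dphi x y = phi x - phi y - dphi y \<bullet> (x - y)"

end

theory Submission
  imports Defs
begin

theorem lemma3:
  fixes n :: nat and U :: nat and \<gamma> :: real
    and E :: "nat \<Rightarrow> (nat \<times> nat) set"
    and A :: "nat \<Rightarrow> nat \<Rightarrow> nat \<Rightarrow> real"
    and \<Omega> :: "(real^'m) set"
    and f :: "nat \<Rightarrow> nat \<Rightarrow> real^'m \<Rightarrow> real^'m \<Rightarrow> real"
    and df :: "nat \<Rightarrow> nat \<Rightarrow> real^'m \<Rightarrow> real^'m \<Rightarrow> real^'m"
    and g :: "nat \<Rightarrow> nat \<Rightarrow> real^'m \<Rightarrow> real^'h"
    and dg :: "nat \<Rightarrow> nat \<Rightarrow> 'h \<Rightarrow> real^'m \<Rightarrow> real^'m"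
    and \<kappa> \<kappa>1 \<kappa>2 \<kappa>3 :: real
    and phi :: "real^'m \<Rightarrow> real" and dphi :: "real^'m \<Rightarrow> real^'m" and \<mu> :: real
    and \<zeta> \<eta> :: "nat \<Rightarrow> real"
    and x :: "nat \<Rightarrow> nat \<Rightarrow> real^'m" and y :: "nat \<Rightarrow> nat \<Rightarrow> real^'h"
    and T :: nat
  assumes n2: "n \<ge> 2"
    \<comment> \<open>network: (j,i) \<in> E t means j is an in-neighbour of i; nodes are {1..n}\<close>
    and gamma_pos: "\<gamma> > 0"
    and E_sub: "\<And>t. E t \<subseteq> {1..n} \<times> {1..n}"
    and self_loop: "\<And>t i. i \<in> {1..n} \<Longrightarrow> (i, i) \<in> E t"
    and A_edge: "\<And>t i j. i \<in> {1..n} \<Longrightarrow> j \<in> {1..n} \<Longrightarrow> (j, i) \<in> E t \<Longrightarrow>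
                   \<gamma> \<le> A t i j \<and> A t i j \<le> 1"
    and A_nonedge: "\<And>t i j. (j, i) \<notin> E t \<Longrightarrow> A t i j = 0"
    \<comment> \<open>Assumption 1\<close>
    and U_pos: "U > 0"
    and conn: "\<And>t. strongly_connected_on {1..n} (\<Union>k\<in>{t*U..<(t+1)*U}. E k)"
    and row_stoch: "\<And>t i. i \<in> {1..n} \<Longrightarrow> (\<Sum>j=1..n. A t i j) = 1"
    and col_stoch: "\<And>t j. j \<in> {1..n} \<Longrightarrow> (\<Sum>i=1..n. A t i j) = 1"
    \<comment> \<open>Assumption 2\<close>
    and Omega_convex: "convex \<Omega>"
    and Omega_compact: "compact \<Omega>"
    and Omega_bound: "\<And>z. z \<in> \<Omega> \<Longrightarrow> norm z \<le> \<kappa>"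
    and f_convex: "\<And>t i u. i \<in> {1..n} \<Longrightarrow> u \<in> \<Omega> \<Longrightarrow> convex_on \<Omega> (f t i u)"
    and f_grad: "\<And>t i u v. i \<in> {1..n} \<Longrightarrow> u \<in> \<Omega> \<Longrightarrow> v \<in> \<Omega> \<Longrightarrow>
                   (f t i u has_derivative (\<lambda>d. df t i u v \<bullet> d)) (at v within \<Omega>)"
    and g_convex: "\<And>t i k. i \<in> {1..n} \<Longrightarrow> convex_on \<Omega> (\<lambda>z. g t i z $ k)"
    and g_grad: "\<And>t i k u. i \<in> {1..n} \<Longrightarrow> u \<in> \<Omega> \<Longrightarrow>
                   ((\<lambda>z. g t i z $ k) has_derivative (\<lambda>d. dg t i k u \<bullet> d)) (at u within \<Omega>)"
    and X_nonempty: "\<And>t. \<exists>z\<in>\<Omega>. \<forall>k. (\<Sum>i=1..n. g t i z $ k) \<le> 0"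
    and df_bound: "\<And>t i u v. i \<in> {1..n} \<Longrightarrow> u \<in> \<Omega> \<Longrightarrow> v \<in> \<Omega> \<Longrightarrow> norm (df t i u v) \<le> \<kappa>1"
    and g_bound: "\<And>t i u. i \<in> {1..n} \<Longrightarrow> u \<in> \<Omega> \<Longrightarrow> norm (g t i u) \<le> \<kappa>2"
    and dg_bound: "\<And>t i k u. i \<in> {1..n} \<Longrightarrow> u \<in> \<Omega> \<Longrightarrow> norm (dg t i k u) \<le> \<kappa>3"
    \<comment> \<open>mirror map\<close>
    and mu_pos: "\<mu> > 0"
    and phi_grad: "\<And>z. (phi has_derivative (\<lambda>d. dphi z \<bullet> d)) (at z)"
    and phi_sc: "strongly_convex_grad \<mu> phi dphi"
    \<comment> \<open>step sizes\<close>
    and zeta_range: "\<And>t. 0 < \<zeta> t \<and> \<zeta> t \<le> 1"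
    and eta_range: "\<And>t. 0 < \<eta> t \<and> \<eta> t \<le> 1"
    and zeta_le_eta: "\<And>t. \<zeta> t \<le> \<eta> t"
    and zeta_mono: "\<And>s t. s \<le> t \<Longrightarrow> \<zeta> t \<le> \<zeta> s"
    and eta_mono: "\<And>s t. s \<le> t \<Longrightarrow> \<eta> t \<le> \<eta> s"
    \<comment> \<open>algorithm\<close>
    and x_init: "\<And>i. i \<in> {1..n} \<Longrightarrow> x i 0 \<in> \<Omega>"
    and y_init: "\<And>i. i \<in> {1..n} \<Longrightarrow> y i 0 = 0"
    and x_step: "\<And>i t. i \<in> {1..n} \<Longrightarrow>
       x i (Suc t) \<in> \<Omega> \<and>
       (\<forall>w\<in>\<Omega>.
          bregman phi dphi (x i (Suc t)) (\<Sum>j\<in>{j\<in>{1..n}. (j, i) \<in> E t}. A t i j *\<^sub>R x j t)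
          + (\<zeta> t *\<^sub>R df t i (x i t) (x i t)
             + \<eta> t *\<^sub>R (\<Sum>k\<in>UNIV. (y i t $ k) *\<^sub>R dg t i k (x i t))) \<bullet> x i (Suc t)
        \<le> bregman phi dphi w (\<Sum>j\<in>{j\<in>{1..n}. (j, i) \<in> E t}. A t i j *\<^sub>R x j t)
          + (\<zeta> t *\<^sub>R df t i (x i t) (x i t)
             + \<eta> t *\<^sub>R (\<Sum>k\<in>UNIV. (y i t $ k) *\<^sub>R dg t i k (x i t))) \<bullet> w)"
    and y_step: "\<And>i t. i \<in> {1..n} \<Longrightarrow>
       y i (Suc t) = (\<chi> k. max 0 ((1 - \<eta> t) * (\<Sum>j\<in>{j\<in>{1..n}. (j, i) \<in> E t}. A t i j * (y j t $ k))
                                    + \<eta> t * (g t i (x i t) $ k)))"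
  shows "\<forall>i\<in>{1..n}. \<forall>t\<in>{1..T}. norm (y i t) \<le> sqrt (real n) * \<kappa>2"
proof -
  let ?S = "\<lambda>t i. {j\<in>{1..n}. (j, i) \<in> E t}"
  have xin: "\<And>t i. i \<in> {1..n} \<Longrightarrow> x i t \<in> \<Omega>"
  proof -
    fix t i assume i: "i \<in> {1..n}"
    show "x i t \<in> \<Omega>"
    proof (cases t)
      case 0 then show ?thesis using x_init i by simp
    next
      case (Suc s) then show ?thesis using x_step[OF i, of s] by simp
    qed
  qed
  have k2: "0 \<le> \<kappa>2"
  proof -
    have "(1::nat) \<in> {1..n}" using n2 by simp
    then have "norm (g 0 1 (x 1 0)) \<le> \<kappa>2" using g_bound xin by blast
    then show ?thesis using norm_ge_zero order_trans by blast
  qed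
  have Anneg: "\<And>t i j. i \<in> {1..n} \<Longrightarrow> j \<in> ?S t i \<Longrightarrow> 0 \<le> A t i j"
  proof -
    fix t i j assume i: "i \<in> {1..n}" and j: "j \<in> ?S t i"
    then show "0 \<le> A t i j" using A_edge[OF i, of j t] gamma_pos by auto
  qed
  have Asum: "\<And>t i. i \<in> {1..n} \<Longrightarrow> (\<Sum>j\<in>?S t i. A t i j) = 1"
  proof -
    fix t i assume i: "i \<in> {1..n}"
    have "(\<Sum>j\<in>?S t i. A t i j) = (\<Sum>j=1..n. A t i j)"
      by (rule sum.mono_neutral_left) (auto simp: A_nonedge)
    then show "(\<Sum>j\<in>?S t i. A t i j) = 1" using row_stoch[OF i] by simp
  qed
  have main: "\<forall>i\<in>{1..n}. norm (y i t) \<le> \<kappa>2" for t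
  proof (induction t)
    case 0 then show ?case using y_init k2 by simp
  next
    case (Suc t)
    show ?case
    proof
      fix i assume i: "i \<in> {1..n}"
      define v where "v = (1 - \<eta> t) *\<^sub>R (\<Sum>j\<in>?S t i. A t i j *\<^sub>R y j t) + \<eta> t *\<^sub>R g t i (x i t)"
      have "norm (y i (Suc t)) \<le> norm v"
      proof (rule norm_le_componentwise_cart)
        fix k
        have "v $ k = (1 - \<eta> t) * (\<Sum>j\<in>?S t i. A t i j * (y j t $ k)) + \<eta> t * (g t i (x i t) $ k)"
          unfolding v_def by (simp add: sum_component)
        then show "norm (y i (Suc t) $ k) \<le> norm (v $ k)" using y_step[OF i, of t] by simp
      qed
      also have "norm v \<le> (1 - \<eta> t) * norm (\<Sum>j\<in>?S t i. A t i j *\<^sub>R y j t) + \<eta> t * norm (g t i (x i t))"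
      proof -
        have e: "0 \<le> \<eta> t" "0 \<le> 1 - \<eta> t" using eta_range[of t] by auto
        have "norm v \<le> norm ((1 - \<eta> t) *\<^sub>R (\<Sum>j\<in>?S t i. A t i j *\<^sub>R y j t)) + norm (\<eta> t *\<^sub>R g t i (x i t))"
          unfolding v_def by (rule norm_triangle_ineq)
        then show ?thesis using e by simp
      qed
      also have "\<dots> \<le> (1 - \<eta> t) * \<kappa>2 + \<eta> t * \<kappa>2"
      proof (rule add_mono)
        have "norm (\<Sum>j\<in>?S t i. A t i j *\<^sub>R y j t) \<le> (\<Sum>j\<in>?S t i. norm (A t i j *\<^sub>R y j t))"
          by (rule norm_sum)
        also have "\<dots> \<le> (\<Sum>j\<in>?S t i. A t i j * \<kappa>2)"
        proof (rule sum_mono)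
          fix j assume j: "j \<in> ?S t i"
          have "norm (y j t) \<le> \<kappa>2" using Suc j by auto
          then show "norm (A t i j *\<^sub>R y j t) \<le> A t i j * \<kappa>2"
            using Anneg[OF i j] by (simp add: mult_left_mono)
        qed
        also have "\<dots> = \<kappa>2" using Asum[OF i] by (simp add: sum_distrib_right[symmetric])
        finally show "(1 - \<eta> t) * norm (\<Sum>j\<in>?S t i. A t i j *\<^sub>R y j t) \<le> (1 - \<eta> t) * \<kappa>2"
          using eta_range[of t] by (simp add: mult_left_mono)
        show "\<eta> t * norm (g t i (x i t)) \<le> \<eta> t * \<kappa>2"
          using eta_range[of t] g_bound[OF i xin[OF i]] by (simp add: mult_left_mono)
      qed
      also have "\<dots> = \<kappa>2" by (simp add: algebra_simps)
      finally show "norm (y i (Suc t)) \<le> \<kappa>2" .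
    qed
  qed
  have "\<kappa>2 \<le> sqrt (real n) * \<kappa>2"
    using k2 n2 by (simp add: mult_le_cancel_right1)
  then show ?thesis using main by (meson order_trans)
qed

end
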